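(* The set $\{A/B : A, B \in \mathtt{PAL}\}$ is dense in the positive real numbers $\mathbb{R}^{+}$.
   Context: For an integer $n\ge 1$, $(n)_2$ denotes its binary representation, with most significant digit first and no leading zeros. A positive integer $n$ is palindromic if $(n)_2$ reads the same forwards and backwards; $\mathtt{PAL}=\{1,3,5,7,9,15,17,\dots\}$ denotes the set of palindromic numbers. *)

theory Defs
  imports "HOL-Analysis.Analysis"
begin

text \<open>Binary digits of n, least significant digit first; no leading zeros
  (bin_digits 0 = [], so for n \<ge> 1 the last element is 1).\<close>
fun bin_digits :: "nat \<Rightarrow> nat list" where
  "bin_digits n = (if n = 0 then [] else n mod 2 # bin_digits (n div 2))"

declare bin_digits.simps [simp del]

definition PAL :: "nat set" where
  "PAL = {n. n \<ge> 1 \<and> rev (bin_digits n) = bin_digits n}"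

end

theory Submission
  imports Defs
begin

fun bitsk :: "nat \<Rightarrow> nat \<Rightarrow> nat list" where
  "bitsk 0 a = []"
| "bitsk (Suc k) a = a mod 2 # bitsk k (a div 2)"

fun valb :: "nat list \<Rightarrow> nat" where
  "valb [] = 0"
| "valb (x # xs) = x + 2 * valb xs"

lemma bin_digits_split:
  "a < 2 ^ k \<Longrightarrow> b > 0 \<Longrightarrow> bin_digits (a + 2 ^ k * b) = bitsk k a @ bin_digits b"
proof (induction k arbitrary: a)
  case 0
  then show ?case by simp
next
  case (Suc k)
  have "a div 2 < 2 ^ k" using Suc.prems by auto
  then have IH: "bin_digits (a div 2 + 2 ^ k * b) = bitsk k (a div 2) @ bin_digits b"
    using Suc.IH Suc.prems by blast
  have ne: "a + 2 ^ Suc k * b \<noteq> 0" using Suc.prems by simp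
  have m: "(a + 2 ^ Suc k * b) mod 2 = a mod 2" by (simp add: mult.assoc)
  have d: "(a + 2 ^ Suc k * b) div 2 = a div 2 + 2 ^ k * b" by simp
  show ?case
    by (subst bin_digits.simps) (simp only: ne m d IH if_False, simp)
qed

lemma bin_digits_01: "set (bin_digits m) \<subseteq> {0, 1}"
proof (induction m rule: bin_digits.induct)
  case (1 n)
  then show ?case
    by (subst bin_digits.simps) auto
qed

lemma bin_digits_last: "m > 0 \<Longrightarrow> bin_digits m \<noteq> [] \<and> last (bin_digits m) = 1"
proof (induction m rule: bin_digits.induct)
  case (1 n)
  show ?case
  proof (cases "n div 2 = 0")
    case True
    then have "n = 1" using 1(2) by auto
    then show ?thesis by (simp add: bin_digits.simps)
  next
    case False
    have "bin_digits n = n mod 2 # bin_digits (n div 2)" using 1(2) by (subst bin_digits.simps) simp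
    then show ?thesis using 1 False by auto
  qed
qed

lemma bits_val: "set xs \<subseteq> {0, 1} \<Longrightarrow> bitsk (length xs) (valb xs) = xs \<and> valb xs < 2 ^ length xs"
  by (induction xs) auto

lemma bin_digits_val: "valb (bin_digits m) = m"
proof (induction m rule: bin_digits.induct)
  case (1 n)
  then show ?case by (subst bin_digits.simps) auto
qed

lemma len_bin_digits:
  "n \<ge> 1 \<Longrightarrow> 2 ^ (n - 1) \<le> m \<Longrightarrow> m < 2 ^ n \<Longrightarrow> length (bin_digits m) = n"
proof (induction n arbitrary: m rule: nat_induct_at_least)
  case base
  then have "m = 1" by simp
  then show ?case by (simp add: bin_digits.simps)
next
  case (Suc n)
  have "m \<noteq> 0" using Suc.prems by (metis not_less0 le_zero_eq power_not_zero zero_neq_numeral)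
  moreover have "2 ^ (n - 1) \<le> m div 2" using Suc.prems Suc.hyps
    by (metis Suc_diff_le diff_Suc_1 div_le_mono nonzero_mult_div_cancel_left power_Suc zero_neq_numeral)
  moreover have "m div 2 < 2 ^ n" using Suc.prems by auto
  ultimately show ?case using Suc.IH by (subst bin_digits.simps) simp
qed

lemma key_pal:
  assumes "m \<ge> 1"
  shows "\<exists>A \<in> PAL. 2 ^ length (bin_digits m) * m \<le> A \<and> A < 2 ^ length (bin_digits m) * (m + 1)"
proof -
  define d where "d = bin_digits m"
  define n where "n = length d"
  define r where "r = valb (rev d)"
  have s: "set (rev d) \<subseteq> {0,1}" using bin_digits_01 d_def by simp
  from bits_val[OF s] have br: "bitsk n r = rev d" and rl: "r < 2 ^ n"
    by (simp_all add: n_def r_def)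
  have bd: "bin_digits (r + 2 ^ n * m) = rev d @ d"
    using bin_digits_split[OF rl] assms br d_def by simp
  have "2 ^ n * m > 0" using assms by simp
  then have "1 \<le> r + 2 ^ n * m" by linarith
  then have "r + 2 ^ n * m \<in> PAL" unfolding PAL_def using bd by simp
  moreover have "r + 2 ^ n * m < 2 ^ n * (m + 1)" using rl by simp
  ultimately show ?thesis using rl by (auto simp: n_def d_def intro!: bexI[of _ "r + 2 ^ n * m"])
qed

lemma bits_zero: "bitsk k 0 = replicate k 0"
  by (induction k) auto

lemma pal_pow: "K \<ge> 1 \<Longrightarrow> 2 ^ K + 1 \<in> PAL"
proof -
  assume K: "K \<ge> 1"
  then obtain j where j: "K = Suc j" by (cases K) auto
  have "bin_digits (1 + 2 ^ K * 1) = bitsk K 1 @ bin_digits 1"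
    by (rule bin_digits_split) (use one_less_power[of "2::nat" K] j in auto)
  then have "bin_digits (2 ^ K + 1) = 1 # replicate j 0 @ [1]"
    using j by (simp add: bits_zero bin_digits.simps)
  then show ?thesis unfolding PAL_def by simp
qed

lemma approx:
  fixes x e :: real
  assumes x: "x > 0" and e: "e > 0"
  shows "\<exists>A\<in>PAL. \<exists>B\<in>PAL. \<bar>real A / real B - x\<bar> < e"
proof -
  obtain K0 :: nat where K0: "1 / x < 2 ^ K0" using real_arch_pow[of 2 "1/x"] by auto
  define y0 where "y0 = x * 2 ^ K0"
  have y0: "1 < y0" using K0 x unfolding y0_def by (simp add: field_simps)
  have "nat \<lfloor>y0\<rfloor> \<ge> 1" using y0 by linarith
  then obtain p where p: "2 ^ p \<le> nat \<lfloor>y0\<rfloor>" "nat \<lfloor>y0\<rfloor> < 2 ^ (p + 1)"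
    using ex_power_ivl1[of 2 "nat \<lfloor>y0\<rfloor>"] by auto
  have p1: "2 ^ p \<le> y0"
  proof -
    have "real (2 ^ p) \<le> real (nat \<lfloor>y0\<rfloor>)" using p(1) by linarith
    also have "\<dots> \<le> y0" using y0 by linarith
    finally show ?thesis by simp
  qed
  have p2: "y0 < 2 ^ (p + 1)"
  proof -
    have "nat \<lfloor>y0\<rfloor> + 1 \<le> 2 ^ (p + 1)" using p(2) by linarith
    then have "real (nat \<lfloor>y0\<rfloor>) + 1 \<le> real (2 ^ (p + 1))" by linarith
    moreover have "y0 < real (nat \<lfloor>y0\<rfloor>) + 1" using y0 by linarith
    ultimately show ?thesis by simp
  qed
  define c where "c = (2 * x + 2 * x ^ 2) / e"
  obtain N :: nat where N: "c < 2 ^ N" using real_arch_pow[of 2 c] by auto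
  define n where "n = max N (p + 1)"
  have n1: "n \<ge> p + 1" and cn: "c < 2 ^ n"
    unfolding n_def using N by (auto intro: less_le_trans)
  define t where "t = 2 * n - 1 - p"
  have pt: "p + t = 2 * n - 1" and t1: "t \<ge> 1" using n1 unfolding t_def by auto
  define K where "K = K0 + t"
  have K1: "K \<ge> 1" using t1 unfolding K_def by simp
  define y where "y = x * 2 ^ K"
  have yy0: "y = y0 * 2 ^ t" unfolding y_def y0_def K_def by (simp add: power_add)
  have ylo: "2 ^ (2 * n - 1) \<le> y"
  proof -
    have "(2::real) ^ (2 * n - 1) = 2 ^ p * 2 ^ t" using pt by (metis power_add)
    also have "\<dots> \<le> y0 * 2 ^ t" using p1 by simp
    finally show ?thesis using yy0 by simp
  qed
  have yhi: "y < 2 ^ (2 * n)"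
  proof -
    have "y < 2 ^ (p + 1) * 2 ^ t" using p2 yy0 by simp
    also have "\<dots> = 2 ^ (2 * n)"
    proof -
      have e: "p + 1 + t = 2 * n" using pt n1 by simp
      show ?thesis by (metis e power_add)
    qed
    finally show ?thesis .
  qed
  define P :: real where "P = 2 ^ n"
  have P1: "P \<ge> 1" unfolding P_def by simp
  have n0: "n \<ge> 1" using n1 by simp
  have PP: "(2::real) ^ (2 * n) = P * P" unfolding P_def by (simp add: power_mult_distrib power2_eq_square power_mult[symmetric] mult.commute[of 2] power_add[symmetric])
  have PP2: "(2::real) ^ (2 * n - 1) = P * P / 2"
  proof -
    have "(2::real) ^ (2 * n) = 2 * 2 ^ (2 * n - 1)" using n0 by (metis Suc_diff_1 mult_pos_pos pos2 zero_less_one_class.zero_less_one less_le_trans power_Suc order.strict_trans1 one_le_numeral)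
    then show ?thesis using PP by simp
  qed
  define m where "m = nat \<lfloor>y / P\<rfloor>"
  have Pn1: "(2::real) ^ (n - 1) = P / 2" unfolding P_def using n0
    by (metis Suc_diff_1 less_le_trans one_le_numeral power_Suc nonzero_mult_div_cancel_left zero_neq_numeral zero_less_one)
  have yP1: "P / 2 \<le> y / P" using ylo PP2 P1 by (simp add: field_simps)
  have yP2: "y / P < P" using yhi PP P1 by (simp add: field_simps)
  have mlo: "real m \<le> y / P" and mhi: "y / P < real m + 1"
    unfolding m_def using yP1 P1 by (auto, linarith+)
  have m1: "2 ^ (n - 1) \<le> m"
  proof -
    have "real (2 ^ (n - 1)) = P / 2" using Pn1 by simp
    then have "real (2 ^ (n - 1)) \<le> y / P" using yP1 by linarith
    then show ?thesis unfolding m_def by (metis le_nat_floor of_nat_numeral of_nat_power floor_of_nat nat_int le_floor_iff)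
  qed
  have m2: "m < 2 ^ n"
  proof -
    have "real (2 ^ n) = P" unfolding P_def by simp
    then have "real m < real (2 ^ n)" using mlo yP2 by linarith
    then show ?thesis by (simp only: of_nat_less_iff)
  qed
  have mpos: "m \<ge> 1" using m1 by (metis le_trans one_le_numeral one_le_power)
  have len: "length (bin_digits m) = n" using len_bin_digits[OF n0 m1 m2] .
  obtain A where A: "A \<in> PAL" "2 ^ n * m \<le> A" "A < 2 ^ n * (m + 1)"
    using key_pal[OF mpos] len by auto
  have A1: "P * m \<le> real A" using A(2) unfolding P_def by (metis of_nat_le_iff of_nat_mult of_nat_numeral of_nat_power)
  have A2: "real A < P * (m + 1)"
  proof -
    have "real A < real (2 ^ n * (m + 1))" using A(3) by (simp only: of_nat_less_iff)
    then show ?thesis unfolding P_def by (simp add: algebra_simps)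
  qed
  have Ay: "\<bar>real A - y\<bar> < P"
  proof -
    have "P * m \<le> y" using mlo P1 by (simp add: field_simps)
    moreover have "y < P * (m + 1)" using mhi P1 by (simp add: field_simps)
    ultimately show ?thesis using A1 A2 by (simp add: algebra_simps abs_less_iff)
  qed
  define B :: nat where "B = 2 ^ K + 1"
  have B: "B \<in> PAL" unfolding B_def using pal_pow[OF K1] .
  define Q :: real where "Q = 2 ^ K"
  have Q: "Q > 0" unfolding Q_def by simp
  have RB: "real B = Q + 1" unfolding B_def Q_def by simp
  have yQ: "y = x * Q" unfolding y_def Q_def ..
  have Q1: "Q + 1 > 0" using Q by simp
  have eq: "real A / real B - x = (real A - y - x) / (Q + 1)"
  proof -
    have xx: "x = x * (Q + 1) / (Q + 1)" using Q1 by simp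
    have "real A / real B - x = (real A - x * (Q + 1)) / (Q + 1)"
      unfolding RB by (subst xx) (simp only: diff_divide_distrib)
    then show ?thesis unfolding yQ by (simp add: algebra_simps)
  qed
  have "\<bar>real A / real B - x\<bar> = \<bar>real A - y - x\<bar> / (Q + 1)"
    unfolding eq abs_divide abs_of_pos[OF Q1] ..
  also have "\<dots> \<le> (P + x) / (Q + 1)"
  proof (rule divide_right_mono)
    have "real A - y < P" "y - real A < P" using Ay by (simp_all add: abs_less_iff)
    then show "\<bar>real A - y - x\<bar> \<le> P + x" using x unfolding abs_le_iff by linarith
  qed (use Q1 in linarith)
  also have "\<dots> \<le> (P + x) / Q"
    using Q P1 x by (intro divide_left_mono) auto
  also have "\<dots> \<le> (P + x) * (2 * x) / (P * P)"
  proof -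
    have "P * P / 2 \<le> x * Q" using ylo PP2 yQ by simp
    then have h: "P * P \<le> 2 * x * Q" by simp
    have "(P + x) / Q = (P + x) * (2 * x) / (2 * x * Q)" using x Q by simp
    also have "\<dots> \<le> (P + x) * (2 * x) / (P * P)"
      by (rule frac_le) (use h x P1 in \<open>auto intro: mult_pos_pos\<close>)
    finally show ?thesis .
  qed
  also have "\<dots> \<le> (2 * x + 2 * x ^ 2) / P"
  proof -
    have "(P + x) * (2 * x) = 2 * x * P + 2 * x ^ 2" by (simp add: algebra_simps power2_eq_square)
    also have "\<dots> \<le> (2 * x + 2 * x ^ 2) * P"
    proof -
      have "2 * x ^ 2 \<le> 2 * x ^ 2 * P" using P1 x by simp
      then show ?thesis by (simp add: algebra_simps)
    qed
    finally have h: "(P + x) * (2 * x) \<le> (2 * x + 2 * x ^ 2) * P" .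
    have "(P + x) * (2 * x) / (P * P) \<le> (2 * x + 2 * x ^ 2) * P / (P * P)"
      using h P1 by (intro divide_right_mono) auto
    also have "\<dots> = (2 * x + 2 * x ^ 2) / P" using P1 by simp
    finally show ?thesis .
  qed
  also have "\<dots> < e"
  proof -
    have "(2 * x + 2 * x ^ 2) / e < P" using cn unfolding c_def P_def .
    then have "2 * x + 2 * x ^ 2 < P * e" using e by (simp add: pos_divide_less_eq)
    then show ?thesis using P1 by (simp add: pos_divide_less_eq mult.commute)
  qed
  finally show ?thesis using A(1) B by blast
qed

theorem theorem2:
  shows "closure {real A / real B | A B. A \<in> PAL \<and> B \<in> PAL} \<supseteq> {0<..}"
proof
  fix x :: real
  assume "x \<in> {0<..}"
  then have x: "x > 0" by simp
  show "x \<in> closure {real A / real B | A B. A \<in> PAL \<and> B \<in> PAL}"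
    unfolding closure_approachable
  proof (intro allI impI)
    fix e :: real
    assume "e > 0"
    then obtain A B where "A \<in> PAL" "B \<in> PAL" "\<bar>real A / real B - x\<bar> < e"
      using approx[OF x] by blast
    then show "\<exists>y\<in>{real A / real B | A B. A \<in> PAL \<and> B \<in> PAL}. dist y x < e"
      by (auto simp: dist_real_def)
  qed
qed

end
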